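(* Let $f\colon X\to X$ be a homeomorphism of a compact metric space $(X,d)$ with the shadowing property. For every $\epsilon>0$ there is $\delta>0$ such that: if $x\in\Omega(f)$, $y\in X$ and $n>0$ satisfy $\epsilon<\gamma:=\max\{d(f^k(x),f^k(y)):0\le k<n\}$ and $\max\{d(x,y),d(f^n(x),f^n(y))\}<\delta$, then there exist $N\ge1$ and a compact set $K\subset X$ with $\sup_{k\in\mathbb{Z}}\operatorname{diam}(f^k(K))\le2\gamma$, $f^N(K)=K$, and $f^N|_K$ semi-conjugate to the full shift on two symbols. In particular $K$ is uncountable and the topological entropy of $f^N|_K$ is at least $\log 2$.
   Context: Shadowing: for every $\varepsilon>0$ there is $\delta>0$ such that for every sequence $(x_k)_{k\in\mathbb{Z}}$ with $d(f(x_k),x_{k+1})<\delta$ for all $k$ there is $y$ with $d(f^k(y),x_k)<\varepsilon$ for all $k\in\mathbb{Z}$. $\Omega(f)$ is the set of non-wandering points: $x$ such that for every open $U\ni x$ there is $k>0$ with $f^k(U)\cap U\ne\emptyset$. $g\colon K\to K$ is semi-conjugate to the full shift $\sigma$ on $\{0,1\}^{\mathbb{Z}}$ if there is a continuous surjection $h\colon K\to\{0,1\}^{\mathbb{Z}}$ with $h\circ g=\sigma\circ h$. *)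

theory Defs
  imports "HOL-Analysis.Analysis"
begin

definition zpow :: "('a \<Rightarrow> 'a) \<Rightarrow> ('a \<Rightarrow> 'a) \<Rightarrow> int \<Rightarrow> 'a \<Rightarrow> 'a" where
  "zpow f g k = (if 0 \<le> k then f ^^ nat k else g ^^ nat (- k))"

definition shadowing :: "'a::metric_space set \<Rightarrow> ('a \<Rightarrow> 'a) \<Rightarrow> ('a \<Rightarrow> 'a) \<Rightarrow> bool" where
  "shadowing X f g \<longleftrightarrow>
     (\<forall>e>0. \<exists>d>0. \<forall>xs :: int \<Rightarrow> 'a.
        (\<forall>k. xs k \<in> X) \<and> (\<forall>k. dist (f (xs k)) (xs (k + 1)) < d) \<longrightarrow>
        (\<exists>y\<in>X. \<forall>k. dist (zpow f g k y) (xs k) < e))"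

definition nonwandering :: "'a::metric_space set \<Rightarrow> ('a \<Rightarrow> 'a) \<Rightarrow> 'a set" where
  "nonwandering X f = {x \<in> X. \<forall>U. openin (top_of_set X) U \<and> x \<in> U \<longrightarrow>
                                 (\<exists>k>0. (f ^^ k) ` U \<inter> U \<noteq> {})}"

definition shift_top :: "(int \<Rightarrow> bool) topology" where
  "shift_top = product_topology (\<lambda>_. discrete_topology (UNIV :: bool set)) UNIV"

definition full_shift :: "(int \<Rightarrow> bool) \<Rightarrow> (int \<Rightarrow> bool)" where
  "full_shift s = (\<lambda>k. s (k + 1))"

definition semiconj_full_shift :: "('a::metric_space \<Rightarrow> 'a) \<Rightarrow> 'a set \<Rightarrow> bool" where
  "semiconj_full_shift T K \<longleftrightarrow>
     (\<exists>h. continuous_map (top_of_set K) shift_top h \<and> h ` K = topspace shift_top \<and>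
          (\<forall>y\<in>K. h (T y) = full_shift (h y)))"

definition separated :: "('a::metric_space \<Rightarrow> 'a) \<Rightarrow> 'a set \<Rightarrow> nat \<Rightarrow> real \<Rightarrow> 'a set \<Rightarrow> bool" where
  "separated T K n e E \<longleftrightarrow> E \<subseteq> K \<and>
     (\<forall>x\<in>E. \<forall>y\<in>E. x \<noteq> y \<longrightarrow> (\<exists>k<n. dist ((T ^^ k) x) ((T ^^ k) y) > e))"

definition max_sep :: "('a::metric_space \<Rightarrow> 'a) \<Rightarrow> 'a set \<Rightarrow> nat \<Rightarrow> real \<Rightarrow> real" where
  "max_sep T K n e = Sup {real (card E) | E. finite E \<and> separated T K n e E}"

definition top_entropy :: "('a::metric_space \<Rightarrow> 'a) \<Rightarrow> 'a set \<Rightarrow> ereal" where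
  "top_entropy T K = (SUP e\<in>{0<..}. limsup (\<lambda>n. ereal (ln (max_sep T K n e) / real n)))"

end

theory Submission
  imports Defs
begin


lemma funpow_in: "f ` X \<subseteq> X \<Longrightarrow> z \<in> X \<Longrightarrow> (f ^^ m) z \<in> X"
  by (induction m) auto

lemma funpow_cont: "f ` X \<subseteq> X \<Longrightarrow> continuous_on X f \<Longrightarrow> continuous_on X (f ^^ m)"
proof (induction m)
  case 0 then show ?case by (simp add: continuous_on_id)
next
  case (Suc m)
  have "continuous_on X (f \<circ> (f ^^ m))"
    by (rule continuous_on_compose) (use Suc funpow_in[of f X] in \<open>auto intro: continuous_on_subset\<close>)
  then show ?case by (simp add: funpow_Suc_right[symmetric] comp_def)
qed

locale hsys =
  fixes X :: "'a::metric_space set" and f g :: "'a \<Rightarrow> 'a"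
  assumes hom: "homeomorphism X X f g"
begin

lemma fX: "f ` X \<subseteq> X" and gX: "g ` X \<subseteq> X" and gf: "\<And>z. z \<in> X \<Longrightarrow> g (f z) = z"
  and fg: "\<And>z. z \<in> X \<Longrightarrow> f (g z) = z" and fc: "continuous_on X f" and gc: "continuous_on X g"
  using hom by (auto simp: homeomorphism_def)

lemma zpow_in: "z \<in> X \<Longrightarrow> zpow f g k z \<in> X"
  using funpow_in[OF fX] funpow_in[OF gX] by (simp add: zpow_def)

lemma zpow_cont: "continuous_on X (zpow f g k)"
  using funpow_cont[OF fX fc] funpow_cont[OF gX gc] by (simp add: zpow_def)

lemma zpow_nat: "zpow f g (int m) = f ^^ m"
  by (simp add: zpow_def)

lemma zpow_Suc: "w \<in> X \<Longrightarrow> zpow f g (k + 1) w = f (zpow f g k w)"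
proof (cases "k \<ge> 0")
  case True
  then have "nat (k+1) = Suc (nat k)" by simp
  with True show ?thesis by (simp add: zpow_def)
next
  case False
  assume w: "w \<in> X"
  show ?thesis
  proof (cases "k = -1")
    case True then show ?thesis using w fg by (simp add: zpow_def)
  next
    case F2: False
    then have e: "nat (-k) = Suc (nat (-(k+1)))" using False by simp
    have "(g ^^ nat (-(k+1))) w \<in> X" using funpow_in[OF gX] w by blast
    then show ?thesis using False F2 e fg by (simp add: zpow_def)
  qed
qed

lemma zpow_pred: "w \<in> X \<Longrightarrow> zpow f g (k - 1) w = g (zpow f g k w)"
  using zpow_Suc[of w "k-1"] gf zpow_in by (metis diff_add_cancel)

lemma zpow_add: "z \<in> X \<Longrightarrow> zpow f g (a + b) z = zpow f g a (zpow f g b z)"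
proof (induction a rule: int_induct[where k=0])
  case base then show ?case by (simp add: zpow_def)
next
  case (step1 i)
  then show ?case using zpow_Suc zpow_in by (metis add.commute add.left_commute)
next
  case (step2 i)
  then show ?case using zpow_pred zpow_in by (metis add.commute diff_add_eq)
qed

end


lemma uc_iter:
  assumes X: "compact X" and fX: "f ` X \<subseteq> X" and fc: "continuous_on X f" and e: "e > 0"
  shows "\<exists>\<rho>>0. \<forall>a\<in>X. \<forall>b\<in>X. dist a b < \<rho> \<longrightarrow> (\<forall>k<n. dist ((f^^k) a) ((f^^k) b) < e)"
proof (induction n)
  case 0 then show ?case by (auto intro: exI[of _ 1])
next
  case (Suc n)
  then obtain r1 where r1: "r1 > 0" "\<forall>a\<in>X. \<forall>b\<in>X. dist a b < r1 \<longrightarrow> (\<forall>k<n. dist ((f^^k) a) ((f^^k) b) < e)" by blast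
  have "uniformly_continuous_on X (f^^n)"
    using compact_uniformly_continuous[OF funpow_cont[OF fX fc] X] .
  then obtain r2 where r2: "r2 > 0" "\<forall>a\<in>X. \<forall>b\<in>X. dist a b < r2 \<longrightarrow> dist ((f^^n) a) ((f^^n) b) < e"
    unfolding uniformly_continuous_on_def using e by metis
  show ?case
    apply (rule exI[of _ "min r1 r2"])
    using r1 r2 less_Suc_eq by auto
qed



lemma funpow_mult_fix: "(f^^p) x = x \<Longrightarrow> (f^^(p*q)) x = x"
  by (induction q) (auto simp: funpow_add)

lemma chain_back:
  assumes X: "compact X" and fX: "f ` X \<subseteq> X" and fc: "continuous_on X f"
    and x: "x \<in> nonwandering X f" and eta: "\<eta> > 0" and n: "n > 0"
  shows "\<exists>m\<ge>1. \<exists>c. c 0 = (f^^n) x \<and> c m = x \<and> (\<forall>i\<le>m. c i \<in> X) \<and>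
           (\<forall>i<m. dist (f (c i)) (c (Suc i)) < \<eta>)"
proof -
  have xX: "x \<in> X" using x by (simp add: nonwandering_def)
  show ?thesis
  proof (cases "\<exists>p. 1 \<le> p \<and> p \<le> n \<and> (f^^p) x = x")
    case True
    then obtain p where p: "1 \<le> p" "p \<le> n" "(f^^p) x = x" by blast
    define m where "m = p*(n+1) - n"
    have ge: "n + 1 \<le> p*(n+1)" using p(1) by (metis mult_1 mult_le_mono1)
    have nm: "n + m = p*(n+1)" unfolding m_def using ge by simp
    have m1: "m \<ge> 1" unfolding m_def using ge by simp
    show ?thesis
      apply (rule exI[of _ m], rule conjI[OF m1])
      apply (rule exI[of _ "\<lambda>i. (f^^(n+i)) x"])
      using funpow_mult_fix[OF p(3), of "n+1"] nm funpow_in[OF fX xX] eta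
      by (auto simp: mult.commute)
  next
    case False
    then have np: "\<And>p. 1 \<le> p \<Longrightarrow> p \<le> n \<Longrightarrow> dist ((f^^p) x) x > 0" by auto
    define D where "D = Min ((\<lambda>p. dist ((f^^p) x) x) ` {1..n})"
    have Dp: "D > 0" unfolding D_def using np n by (subst Min_gr_iff) auto
    have Dle: "\<And>p. 1 \<le> p \<Longrightarrow> p \<le> n \<Longrightarrow> D \<le> dist ((f^^p) x) x"
      unfolding D_def by (rule Min_le) auto
    define e where "e = min (\<eta>/2) (D/2)"
    have e: "e > 0" using Dp eta by (simp add: e_def)
    obtain \<rho> where rho: "\<rho> > 0" "\<forall>a\<in>X. \<forall>b\<in>X. dist a b < \<rho> \<longrightarrow> (\<forall>k<n+2. dist ((f^^k) a) ((f^^k) b) < e)"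
      using uc_iter[OF X fX fc e] by blast
    define r where "r = min \<rho> e"
    have r: "r > 0" using rho e by (simp add: r_def)
    define U where "U = X \<inter> ball x r"
    have "openin (top_of_set X) U" unfolding U_def by (simp add: openin_open_Int)
    moreover have "x \<in> U" using xX r by (simp add: U_def)
    ultimately obtain k where k: "k > 0" "(f^^k) ` U \<inter> U \<noteq> {}"
      using x unfolding nonwandering_def by blast
    then obtain u where u: "u \<in> U" "(f^^k) u \<in> U" by blast
    have uX: "u \<in> X" and du: "dist x u < r" and dku: "dist x ((f^^k) u) < r"
      using u by (auto simp: U_def)
    have close: "\<And>j. j < n+2 \<Longrightarrow> dist ((f^^j) u) ((f^^j) x) < e"
      using rho(2) uX xX du r_def by (auto simp: dist_commute)
    have kn: "k > n"
    proof (rule ccontr)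
      assume "\<not> n < k"
      then have "k \<le> n" by simp
      have "dist ((f^^k) x) x \<le> dist ((f^^k) x) ((f^^k) u) + dist ((f^^k) u) x"
        by (rule dist_triangle)
      also have "\<dots> < e + r" using close[of k] \<open>k \<le> n\<close> dku by (simp add: dist_commute add_strict_mono)
      also have "\<dots> \<le> D" unfolding r_def e_def by linarith
      finally show False using Dle[of k] k \<open>k \<le> n\<close> by simp
    qed
    define m where "m = k - n"
    have m1: "m \<ge> 1" and km: "k = n + m" using kn by (auto simp: m_def)
    define c where "c i = (if i = 0 then (f^^n) x else if i = m then x else (f^^(n+i)) u)" for i
    have cX: "\<forall>i\<le>m. c i \<in> X" unfolding c_def using funpow_in[OF fX] xX uX by auto
    have step: "dist (f (c i)) (c (Suc i)) < \<eta>" if i: "i < m" for i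
    proof (cases "i = 0")
      case True
      have d1: "dist ((f^^(n+1)) x) ((f^^(n+1)) u) < e" using close[of "n+1"] by (simp add: dist_commute)
      show ?thesis
      proof (cases "m = 1")
        case True
        have "dist ((f^^(n+1)) x) x \<le> dist ((f^^(n+1)) x) ((f^^(n+1)) u) + dist ((f^^(n+1)) u) x"
          by (rule dist_triangle)
        also have "\<dots> < e + r" using d1 dku km True by (simp add: dist_commute add_strict_mono)
        also have "\<dots> \<le> \<eta>" unfolding r_def e_def by linarith
        finally show ?thesis using \<open>i = 0\<close> True by (simp add: c_def)
      next
        case False
        then show ?thesis using \<open>i=0\<close> d1 e_def eta m1 by (simp add: c_def)
      qed
    next
      case False
      show ?thesis
      proof (cases "Suc i = m")
        case True
        then have "dist (f (c i)) (c (Suc i)) = dist ((f^^k) u) x"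
          using False km by (auto simp: c_def simp flip: True)
        moreover have "r \<le> \<eta>/2" unfolding r_def e_def by simp
        ultimately show ?thesis using dku eta by (simp add: dist_commute)
      next
        case F2: False
        then show ?thesis using False i eta by (simp add: c_def)
      qed
    qed
    show ?thesis
      apply (rule exI[of _ m], rule conjI[OF m1])
      apply (rule exI[of _ c])
      using cX step m1 by (simp add: c_def)
  qed
qed



lemma uncountable_shift: "uncountable (UNIV :: (int \<Rightarrow> bool) set)"
proof
  assume "countable (UNIV :: (int\<Rightarrow>bool) set)"
  then obtain \<phi> :: "(int\<Rightarrow>bool) \<Rightarrow> nat" where inj: "inj \<phi>" by (auto simp: countable_def)
  define s where "s i = (\<not> inv \<phi> (nat i) i)" for i::int
  have "inv \<phi> (\<phi> s) = s" using inv_f_f[OF inj] .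
  then have "s (int (\<phi> s)) = (\<not> s (int (\<phi> s)))" by (metis nat_int s_def)
  then show False by simp
qed

lemma cont_bool:
  assumes "closedin (top_of_set K) {z\<in>K. p z}" "closedin (top_of_set K) {z\<in>K. \<not> p z}"
  shows "continuous_map (top_of_set K) (discrete_topology UNIV) p"
  unfolding continuous_map_def
proof (intro conjI allI impI)
  show "p \<in> topspace (top_of_set K) \<rightarrow> topspace (discrete_topology UNIV)" by simp
  fix U :: "bool set"
  have o1: "openin (top_of_set K) (K - {z\<in>K. p z})" and o2: "openin (top_of_set K) (K - {z\<in>K. \<not> p z})"
    using assms by (auto intro!: openin_diff)
  have o3: "openin (top_of_set K) K" by (metis openin_topspace topspace_euclidean_subtopology)
  have "{x \<in> topspace (top_of_set K). p x \<in> U} =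
        (if True \<in> U then (if False \<in> U then K else K - {z\<in>K. \<not> p z})
         else (if False \<in> U then K - {z\<in>K. p z} else {}))"
    by auto (metis (full_types))+
  then show "openin (top_of_set K) {x \<in> topspace (top_of_set K). p x \<in> U}"
    using o1 o2 o3 by auto
qed

lemma diameter_le_metric:
  assumes "\<And>x y. x \<in> S \<Longrightarrow> y \<in> S \<Longrightarrow> dist x y \<le> d" and "0 \<le> d"
  shows "diameter S \<le> d"
  using assms by (auto simp: diameter_def intro!: cSUP_least)



context hsys begin

lemma construct:
  assumes X: "compact X" and N: "N \<ge> 1" and ep: "e' > 0"
    and sh: "\<forall>s::int\<Rightarrow>bool. \<exists>y\<in>X. \<forall>j. \<forall>i<N. dist (zpow f g (j * int N + int i) y) ((if s j then B else A) i) < e'"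
    and i0: "i0 < N" "dist (A i0) (B i0) > 2*e'"
    and cb: "\<forall>i<N. dist (A i) (B i) \<le> c"
  shows "\<exists>K. K \<subseteq> X \<and> compact K \<and> (\<forall>k::int. diameter (zpow f g k ` K) \<le> c + 2*e') \<and>
     (f^^N) ` K = K \<and> semiconj_full_shift (f^^N) K \<and> uncountable K \<and> ereal (ln 2) \<le> top_entropy (f^^N) K"
proof -
  define blk where "blk L j z \<longleftrightarrow> (\<forall>i<N. dist (zpow f g (j * int N + int i) z) (L i) \<le> e')"
    for L :: "nat \<Rightarrow> 'a" and j z
  define K where "K = {z\<in>X. \<forall>j. blk A j z \<or> blk B j z}"
  define h where "h z = (\<lambda>j. blk B j z)" for z
  have Xc: "closed X" using X compact_imp_closed by blast
  have disj: False if "blk A j z" "blk B j z" for j z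
  proof -
    let ?p = "zpow f g (j * int N + int i0) z"
    have "dist (A i0) (B i0) \<le> dist ?p (A i0) + dist ?p (B i0)" by (rule dist_triangle3)
    also have "\<dots> \<le> 2*e'" using that i0 unfolding blk_def by fastforce
    finally show False using i0 by simp
  qed
  have cl: "closed {z\<in>X. dist (zpow f g t z) a \<le> e'}" for t a
    by (rule continuous_on_closed_Collect_le[OF _ continuous_on_const Xc])
       (intro continuous_on_dist zpow_cont continuous_on_const)
  have blkset: "{z\<in>X. blk L j z} = X \<inter> (\<Inter>i\<in>{..<N}. {z\<in>X. dist (zpow f g (j * int N + int i) z) (L i) \<le> e'})" for L j
    unfolding blk_def using N by auto
  have clb: "closed {z\<in>X. blk L j z}" for L j
    unfolding blkset using cl by (intro closed_Int Xc closed_INT) auto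
  have Keq: "K = X \<inter> (\<Inter>j. {z\<in>X. blk A j z} \<union> {z\<in>X. blk B j z})"
    unfolding K_def by auto
  have Kcl: "closed K" unfolding Keq using clb by (intro closed_Int Xc closed_INT) (auto intro: closed_Un)
  have KX: "K \<subseteq> X" unfolding K_def by auto
  have Kc: "compact K" using compact_Int_closed[OF X Kcl] KX by (simp add: Int_absorb1)
  have fN: "(f^^N) z = zpow f g (int N) z" for z by (simp add: zpow_nat)
  have shift: "blk L j ((f^^N) z) = blk L (j+1) z" if "z \<in> X" for L j z
  proof -
    have "zpow f g (j * int N + int i) ((f^^N) z) = zpow f g ((j+1) * int N + int i) z" for i
      unfolding fN using zpow_add[OF that, of "j * int N + int i" "int N", symmetric]
      by (simp add: algebra_simps)
    then show ?thesis unfolding blk_def by simp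
  qed
  have bk: "blk L j (zpow f g (- int N) z) = blk L (j-1) z" if "z \<in> X" for L j z
  proof -
    have "zpow f g (j * int N + int i) (zpow f g (- int N) z) = zpow f g ((j-1) * int N + int i) z" for i
      using zpow_add[OF that, of "j * int N + int i" "- int N", symmetric]
      by (simp add: algebra_simps)
    then show ?thesis unfolding blk_def by simp
  qed
  have fNX: "(f^^N) z \<in> X" if "z \<in> X" for z using funpow_in[OF fX that] .
  have KN: "(f^^N) ` K = K"
  proof
    show "(f^^N) ` K \<subseteq> K"
    proof
      fix w assume "w \<in> (f^^N) ` K"
      then obtain z where z: "z \<in> K" "w = (f^^N) z" by blast
      then have zX: "z \<in> X" using KX by blast
      show "w \<in> K" using z(1) unfolding z(2) K_def using fNX[OF zX] shift[OF zX] by simp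
    qed
    show "K \<subseteq> (f^^N) ` K"
    proof
      fix z assume z: "z \<in> K"
      then have zX: "z \<in> X" using KX by auto
      define w where "w = zpow f g (- int N) z"
      have wX: "w \<in> X" unfolding w_def using zpow_in[OF zX] .
      have "w \<in> K" using z wX unfolding K_def w_def by (auto simp: bk)
      moreover have "(f^^N) w = z"
        unfolding fN w_def using zpow_add[OF zX, of "int N" "- int N", symmetric] by (simp add: zpow_def)
      ultimately show "z \<in> (f^^N) ` K" by force
    qed
  qed
  have hshift: "h ((f^^N) z) = full_shift (h z)" if "z \<in> K" for z
  proof -
    have "z \<in> X" using that KX by blast
    then show ?thesis unfolding h_def full_shift_def using shift by simp
  qed
  have surj: "\<exists>z\<in>K. h z = s" for s
  proof -
    obtain y where y: "y \<in> X" "\<forall>j. \<forall>i<N. dist (zpow f g (j * int N + int i) y) ((if s j then B else A) i) < e'"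
      using sh by blast
    have b: "blk (if s j then B else A) j y" for j
      using y(2) unfolding blk_def by (simp add: less_imp_le)
    have "y \<in> K" unfolding K_def
    proof (intro CollectI conjI allI y(1))
      fix j show "blk A j y \<or> blk B j y" using b[of j] by (cases "s j") auto
    qed
    moreover have "h y = s"
    proof
      fix j show "h y j = s j" using b[of j] disj[of j y] unfolding h_def by (cases "s j") auto
    qed
    ultimately show ?thesis by blast
  qed
  have surj': "s \<in> h ` K" for s using surj[of s] by (metis image_eqI)
  have K1: "{z\<in>K. blk B j z} = K \<inter> {z\<in>X. blk B j z}" for j using KX by auto
  have K0: "{z\<in>K. \<not> blk B j z} = K \<inter> {z\<in>X. blk A j z}" for j
  proof (intro set_eqI iffI)
    fix z assume "z \<in> {z\<in>K. \<not> blk B j z}"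
    then show "z \<in> K \<inter> {z\<in>X. blk A j z}" unfolding K_def by blast
  next
    fix z assume "z \<in> K \<inter> {z\<in>X. blk A j z}"
    then show "z \<in> {z\<in>K. \<not> blk B j z}" using disj[of j z] by blast
  qed
  have cont: "continuous_map (top_of_set K) shift_top h"
    unfolding shift_top_def continuous_map_componentwise_UNIV h_def
  proof
    fix j
    show "continuous_map (top_of_set K) (discrete_topology UNIV) (\<lambda>x. blk B j x)"
      by (rule cont_bool) (simp_all only: K1 K0 closedin_closed_Int clb)
  qed
  have semi: "semiconj_full_shift (f^^N) K"
    unfolding semiconj_full_shift_def
    apply (rule exI[of _ h])
    using cont hshift apply (auto simp: shift_top_def PiE_UNIV_domain)
    using surj' by blast
  have unc: "uncountable K"
  proof
    assume "countable K"
    then have "countable (h ` K)" by simp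
    moreover have "h ` K = UNIV" using surj' by blast
    ultimately show False using uncountable_shift by simp
  qed
  have c0: "0 \<le> c" using cb i0 by (meson order.trans zero_le_dist)
  have diam: "diameter (zpow f g k ` K) \<le> c + 2*e'" for k
  proof (rule diameter_le_metric)
    show "0 \<le> c + 2*e'" using c0 ep by simp
    fix p q assume "p \<in> zpow f g k ` K" "q \<in> zpow f g k ` K"
    then obtain z w where zw: "z \<in> K" "w \<in> K" "p = zpow f g k z" "q = zpow f g k w" by blast
    define j where "j = k div int N"
    define i where "i = nat (k mod int N)"
    have iN: "i < N" unfolding i_def using N by (simp add: nat_less_iff)
    have kji: "k = j * int N + int i" unfolding i_def j_def using N by simp
    obtain La where La: "La = A \<or> La = B" "blk La j z" using zw K_def by blast
    obtain Lb where Lb: "Lb = A \<or> Lb = B" "blk Lb j w" using zw K_def by blast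
    have d1: "dist p (La i) \<le> e'" using La iN zw kji unfolding blk_def by auto
    have d2: "dist q (Lb i) \<le> e'" using Lb iN zw kji unfolding blk_def by auto
    have d3: "dist (La i) (Lb i) \<le> c" using La(1) Lb(1) cb iN c0 by (auto simp: dist_commute)
    have "dist p q \<le> dist p (La i) + dist (La i) (Lb i) + dist (Lb i) q"
      by (meson dist_triangle order.trans add_right_mono)
    then show "dist p q \<le> c + 2*e'" using d1 d2 d3 by (simp add: dist_commute)
  qed
  have ent: "ereal (ln 2) \<le> top_entropy (f^^N) K"
  proof -
    define T where "T = f^^N"
    have TX: "T ` X \<subseteq> X" using fNX T_def by auto
    have Tc: "continuous_on X T" unfolding T_def using funpow_cont[OF fX fc] .
    have TKK: "T ` K \<subseteq> K" using KN T_def by simp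
    have TK: "(T^^j) z \<in> K" if "z \<in> K" for j z using funpow_in[OF TKK that] .
    have hT: "h ((T^^j) z) = (\<lambda>k. h z (k + int j))" if z: "z \<in> K" for j z
    proof (induction j)
      case 0 then show ?case by simp
    next
      case (Suc j)
      have "h ((T^^Suc j) z) = full_shift (h ((T^^j) z))"
        using hshift[OF TK[OF z, of j]] by (simp add: T_def)
      then show ?case using Suc by (simp add: full_shift_def algebra_simps)
    qed
    define \<Delta> where "\<Delta> = dist (A i0) (B i0) - 2*e'"
    have Dp: "\<Delta> > 0" using i0 by (simp add: \<Delta>_def)
    obtain \<rho> where rho: "\<rho> > 0" "\<forall>a\<in>X. \<forall>b\<in>X. dist a b < \<rho> \<longrightarrow> (\<forall>k<i0+1. dist ((f^^k) a) ((f^^k) b) < \<Delta>)"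
      using uc_iter[OF X fX fc Dp] by blast
    have sepAB: "\<rho> \<le> dist a b" if ab: "a \<in> X" "b \<in> X" "blk A 0 a" "blk B 0 b" for a b
    proof (rule ccontr)
      assume "\<not> \<rho> \<le> dist a b"
      then have lt: "dist ((f^^i0) a) ((f^^i0) b) < \<Delta>" using rho ab by auto
      have za: "zpow f g (0 * int N + int i0) = f^^i0" by (simp add: zpow_nat)
      have "dist (zpow f g (0 * int N + int i0) a) (A i0) \<le> e'" using spec[OF ab(3)[unfolded blk_def], of i0] i0(1) by (rule mp)
      then have e1: "dist ((f^^i0) a) (A i0) \<le> e'" by (simp only: za)
      have "dist (zpow f g (0 * int N + int i0) b) (B i0) \<le> e'" using spec[OF ab(4)[unfolded blk_def], of i0] i0(1) by (rule mp)
      then have e2: "dist ((f^^i0) b) (B i0) \<le> e'" by (simp only: za)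
      have "dist (A i0) (B i0) \<le> dist (A i0) ((f^^i0) a) + dist ((f^^i0) a) ((f^^i0) b) + dist ((f^^i0) b) (B i0)"
        by (meson dist_triangle order.trans add_right_mono)
      then show False using lt e1 e2 by (simp add: \<Delta>_def dist_commute)
    qed
    have sep01: "\<rho> \<le> dist z w" if zw: "z \<in> K" "w \<in> K" "h z 0 \<noteq> h w 0" for z w
    proof -
      have zX: "z \<in> X" "w \<in> X" using zw KX by auto
      have bz: "blk A 0 z \<or> blk B 0 z" and bw: "blk A 0 w \<or> blk B 0 w" using zw unfolding K_def by auto
      show ?thesis
      proof (cases "h z 0")
        case True
        then have "blk B 0 z" "blk A 0 w" using zw(3) bw unfolding h_def by auto
        then show ?thesis using sepAB[OF zX(2) zX(1)] by (simp add: dist_commute)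
      next
        case False
        then have "blk A 0 z" "blk B 0 w" using zw(3) bz unfolding h_def by auto
        then show ?thesis using sepAB[OF zX(1) zX(2)] by simp
      qed
    qed
    define e0 where "e0 = \<rho>/2"
    have e0: "e0 > 0" using rho by (simp add: e0_def)
    have "\<forall>s. \<exists>z. z \<in> K \<and> h z = s" using surj by blast
    then obtain sel where sel0: "\<forall>s. sel s \<in> K \<and> h (sel s) = s" using choice[of "\<lambda>s z. z \<in> K \<and> h z = s"] by blast
    have sel: "\<And>s. sel s \<in> K" "\<And>s. h (sel s) = s" using sel0 by auto
    define cd where "cd S = (\<lambda>j::int. j \<in> int ` S)" for S :: "nat set"
    define E where "E n = (\<lambda>S. sel (cd S)) ` Pow {..<n}" for n
    have cdinj: "S = S'" if "cd S = cd S'" for S S'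
    proof -
      have "m \<in> S \<longleftrightarrow> m \<in> S'" for m using fun_cong[OF that, of "int m"] by (auto simp: cd_def)
      then show ?thesis by blast
    qed
    have inj: "inj_on (\<lambda>S. sel (cd S)) (Pow {..<n})" for n
    proof (rule inj_onI)
      fix S S' assume "sel (cd S) = sel (cd S')"
      then have "h (sel (cd S)) = h (sel (cd S'))" by simp
      then have "cd S = cd S'" by (simp only: sel(2))
      then show "S = S'" by (rule cdinj)
    qed
    have cardE: "card (E n) = 2^n" for n
      unfolding E_def using card_image[OF inj] by (simp add: card_Pow)
    have finE: "finite (E n)" for n unfolding E_def by simp
    have sepE: "separated T K n e0 (E n)" for n
      unfolding separated_def
    proof (intro conjI ballI impI)
      show "E n \<subseteq> K" unfolding E_def using sel by auto
      fix x y assume xy: "x \<in> E n" "y \<in> E n" "x \<noteq> y"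
      then obtain S S' where S: "S \<subseteq> {..<n}" "S' \<subseteq> {..<n}" "x = sel (cd S)" "y = sel (cd S')"
        unfolding E_def by auto
      then have "S \<noteq> S'" using xy by auto
      then obtain m where m: "(m \<in> S) \<noteq> (m \<in> S')" by blast
      then have mn: "m < n" using S by auto
      have hx: "h ((T^^m) x) 0 = (m \<in> S)" using hT[OF sel(1), of m] S sel(2) by (simp add: cd_def image_iff)
      have hy: "h ((T^^m) y) 0 = (m \<in> S')" using hT[OF sel(1), of m] S sel(2) by (simp add: cd_def image_iff)
      have "\<rho> \<le> dist ((T^^m) x) ((T^^m) y)"
      proof (rule sep01)
        show "(T^^m) x \<in> K" "(T^^m) y \<in> K" using S(3,4) TK sel(1) by simp_all
        show "h ((T^^m) x) 0 \<noteq> h ((T^^m) y) 0" using hx hy m by simp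
      qed
      then have "dist ((T^^m) x) ((T^^m) y) > e0" using rho e0_def by simp
      then show "\<exists>k<n. dist ((T^^k) x) ((T^^k) y) > e0" using mn by blast
    qed
    have bdd: "bdd_above {real (card E) | E. finite E \<and> separated T K n e0 E}" for n
    proof -
      obtain \<rho>' where r': "\<rho>' > 0" "\<forall>a\<in>X. \<forall>b\<in>X. dist a b < \<rho>' \<longrightarrow> (\<forall>k<n. dist ((T^^k) a) ((T^^k) b) < e0)"
        using uc_iter[OF X TX Tc e0] by blast
      have r2: "\<rho>'/2 > 0" using r' by simp
      obtain F where F: "finite F" "F \<subseteq> K" "K \<subseteq> (\<Union>c\<in>F. ball c (\<rho>'/2))"
        using seq_compact_imp_totally_bounded[OF compact_imp_seq_compact[OF Kc], rule_format, OF r2] by blast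
      have "card E' \<le> card F" if E': "separated T K n e0 E'" for E'
      proof -
        have EK: "E' \<subseteq> K" using E' unfolding separated_def by blast
        have "\<forall>a\<in>E'. \<exists>c. c \<in> F \<and> a \<in> ball c (\<rho>'/2)" using EK F(3) by blast
        then obtain \<phi> where \<phi>: "\<forall>a\<in>E'. \<phi> a \<in> F \<and> a \<in> ball (\<phi> a) (\<rho>'/2)" by (rule bchoice[THEN exE]) blast
        have "inj_on \<phi> E'"
        proof (rule inj_onI, rule ccontr)
          fix a b assume ab: "a \<in> E'" "b \<in> E'" "\<phi> a = \<phi> b" "a \<noteq> b"
          have "dist a b \<le> dist (\<phi> a) a + dist (\<phi> a) b" by (rule dist_triangle3)
          also have "\<dots> < \<rho>'"
          proof -
            have "dist (\<phi> a) a < \<rho>'/2" "dist (\<phi> b) b < \<rho>'/2" using \<phi> ab(1,2) by auto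
            then show ?thesis using ab(3) by simp
          qed
          finally have "dist a b < \<rho>'" .
          moreover have "a \<in> X" "b \<in> X" using ab EK KX by auto
          ultimately have "\<forall>k<n. dist ((T^^k) a) ((T^^k) b) < e0" using r' by blast
          moreover obtain k where "k < n" "dist ((T^^k) a) ((T^^k) b) > e0"
            using E' ab unfolding separated_def by blast
          ultimately show False by (meson less_asym)
        qed
        then show ?thesis by (rule card_inj_on_le) (use \<phi> F(1) in auto)
      qed
      note cb = this
      show ?thesis
      proof (rule bdd_aboveI)
        fix r assume "r \<in> {real (card E) | E. finite E \<and> separated T K n e0 E}"
        then obtain E' where "r = real (card E')" "separated T K n e0 E'" by blast
        then show "r \<le> real (card F)" using cb by simp
      qed
    qed
    have ms: "max_sep T K n e0 \<ge> 2^n" for n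
    proof -
      have "real (card (E n)) \<le> max_sep T K n e0"
        unfolding max_sep_def by (rule cSup_upper) (use finE sepE in blast, rule bdd)
      then show ?thesis using cardE by simp
    qed
    have lb: "ereal (ln 2) \<le> ereal (ln (max_sep T K n e0) / real n)" if n: "n \<ge> 1" for n
    proof -
      have pos: "max_sep T K n e0 > 0" using ms[of n] by (meson less_le_trans zero_less_numeral zero_less_power)
      have "ln (2^n) \<le> ln (max_sep T K n e0)" using ms[of n] pos by (subst ln_le_cancel_iff) auto
      then have "real n * ln 2 \<le> ln (max_sep T K n e0)" by (simp add: ln_realpow)
      then show ?thesis using n by (simp add: field_simps)
    qed
    have "ereal (ln 2) \<le> limsup (\<lambda>n. ereal (ln (max_sep T K n e0) / real n))"
      apply (rule le_Limsup)
       apply simp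
      unfolding eventually_sequentially using lb by blast
    also have "\<dots> \<le> top_entropy T K"
      unfolding top_entropy_def by (rule SUP_upper) (use e0 in simp)
    finally show ?thesis by (simp add: T_def)
  qed
  show ?thesis using KX Kc diam KN semi unc ent by blast
qed

end


lemma blockdecomp:
  fixes t :: int assumes "N > (0::nat)"
  obtains j i where "i < N" "t = j * int N + int i"
proof -
  have "t = (t div int N) * int N + int (nat (t mod int N))" using assms by simp
  moreover have "nat (t mod int N) < N" using assms by (simp add: nat_less_iff)
  ultimately show ?thesis using that by blast
qed

lemma blockdivmod:
  fixes j :: int assumes "i < N"
  shows "(j * int N + int i) div int N = j" "nat ((j * int N + int i) mod int N) = i"
  using assms by simp_all

theorem mainTheorem11:
  fixes X :: "'a::metric_space set" and f g :: "'a \<Rightarrow> 'a"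
  assumes "compact X" and "homeomorphism X X f g" and "shadowing X f g"
  shows "\<forall>\<epsilon>>0. \<exists>\<delta>>0. \<forall>x y n \<gamma>.
     x \<in> nonwandering X f \<and> y \<in> X \<and> n > 0 \<and>
     \<gamma> = Max {dist ((f ^^ k) x) ((f ^^ k) y) | k. k < n} \<and> \<epsilon> < \<gamma> \<and>
     max (dist x y) (dist ((f ^^ n) x) ((f ^^ n) y)) < \<delta> \<longrightarrow>
     (\<exists>N\<ge>1. \<exists>K. K \<subseteq> X \<and> compact K \<and>
        (\<forall>k::int. diameter (zpow f g k ` K) \<le> 2 * \<gamma>) \<and>
        (f ^^ N) ` K = K \<and> semiconj_full_shift (f ^^ N) K \<and>
        uncountable K \<and> ereal (ln 2) \<le> top_entropy (f ^^ N) K)"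
proof (intro allI impI)
  fix \<epsilon> :: real assume ep: "\<epsilon> > 0"
  interpret hsys X f g using assms(2) by unfold_locales
  define e' where "e' = \<epsilon>/4"
  have e': "e' > 0" using ep by (simp add: e'_def)
  obtain d' where d': "d' > 0" and shd: "\<And>xs. (\<forall>k. xs k \<in> X) \<Longrightarrow> (\<forall>k. dist (f (xs k)) (xs (k + 1)) < d') \<Longrightarrow>
        (\<exists>y\<in>X. \<forall>k. dist (zpow f g k y) (xs k) < e')"
    using assms(3) e' unfolding shadowing_def by meson
  show "\<exists>\<delta>>0. \<forall>x y n \<gamma>.
     x \<in> nonwandering X f \<and> y \<in> X \<and> n > 0 \<and>
     \<gamma> = Max {dist ((f ^^ k) x) ((f ^^ k) y) | k. k < n} \<and> \<epsilon> < \<gamma> \<and>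
     max (dist x y) (dist ((f ^^ n) x) ((f ^^ n) y)) < \<delta> \<longrightarrow>
     (\<exists>N\<ge>1. \<exists>K. K \<subseteq> X \<and> compact K \<and>
        (\<forall>k::int. diameter (zpow f g k ` K) \<le> 2 * \<gamma>) \<and>
        (f ^^ N) ` K = K \<and> semiconj_full_shift (f ^^ N) K \<and>
        uncountable K \<and> ereal (ln 2) \<le> top_entropy (f ^^ N) K)"
  proof (intro exI[of _ "d'/2"] conjI allI impI)
    show "d'/2 > 0" using d' by simp
    fix x y n \<gamma>
    assume H: "x \<in> nonwandering X f \<and> y \<in> X \<and> n > 0 \<and>
     \<gamma> = Max {dist ((f ^^ k) x) ((f ^^ k) y) | k. k < n} \<and> \<epsilon> < \<gamma> \<and>
     max (dist x y) (dist ((f ^^ n) x) ((f ^^ n) y)) < d'/2"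
    have xN: "x \<in> nonwandering X f" and yX: "y \<in> X" and n: "n > 0"
      and gam: "\<gamma> = Max {dist ((f ^^ k) x) ((f ^^ k) y) | k. k < n}" and eg: "\<epsilon> < \<gamma>"
      and dxy: "dist x y < d'/2" and dn: "dist ((f ^^ n) x) ((f ^^ n) y) < d'/2"
      using H by auto
    have xX: "x \<in> X" using xN by (simp add: nonwandering_def)
    have Seq: "{dist ((f ^^ k) x) ((f ^^ k) y) | k. k < n} = (\<lambda>k. dist ((f ^^ k) x) ((f ^^ k) y)) ` {..<n}"
      by auto
    have finS: "finite {dist ((f ^^ k) x) ((f ^^ k) y) | k. k < n}" unfolding Seq by simp
    have neS: "{dist ((f ^^ k) x) ((f ^^ k) y) | k. k < n} \<noteq> {}" using n by auto
    obtain i0 where i0: "i0 < n" "\<gamma> = dist ((f ^^ i0) x) ((f ^^ i0) y)"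
      using Max_in[OF finS neS] gam by auto
    have gle: "dist ((f ^^ k) x) ((f ^^ k) y) \<le> \<gamma>" if "k < n" for k
      unfolding gam by (rule Max_ge[OF finS]) (use that in blast)
    have h2: "d'/2 > 0" using d' by simp
    obtain m c where m: "m \<ge> 1" and c: "c 0 = (f^^n) x" "c m = x" "\<forall>i\<le>m. c i \<in> X"
       "\<forall>i<m. dist (f (c i)) (c (Suc i)) < d'/2"
      using chain_back[OF assms(1) fX fc xN h2 n] by blast
    define N where "N = n + m"
    define A where "A i = (if i < n then (f^^i) x else c (i - n))" for i
    define B where "B i = (if i < n then (f^^i) y else c (i - n))" for i
    have N1: "N \<ge> 1" "N > 0" using m by (simp_all add: N_def)
    have AX: "A i \<in> X" if "i < N" for i
      using that c(3) funpow_in[OF fX xX] by (auto simp: A_def N_def)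
    have BX: "B i \<in> X" if "i < N" for i
      using that c(3) funpow_in[OF fX yX] by (auto simp: B_def N_def)
    have stepA: "dist (f (A i)) (A (Suc i)) < d'" if "Suc i < N" for i
    proof (cases "Suc i < n")
      case True then show ?thesis using d' by (simp add: A_def)
    next
      case False
      show ?thesis
      proof (cases "Suc i = n")
        case True then show ?thesis using d' c(1) by (simp add: A_def flip: True)
      next
        case F2: False
        then have "i \<ge> n" "i - n < m" "Suc i - n = Suc (i - n)" using False that by (auto simp: N_def)
        moreover have "dist (f (c (i-n))) (c (Suc (i-n))) < d'/2" using c(4) \<open>i - n < m\<close> by blast
        ultimately show ?thesis using F2 False d' by (auto simp: A_def)
      qed
    qed
    have stepB: "dist (f (B i)) (B (Suc i)) < d'" if "Suc i < N" for i
    proof (cases "Suc i < n")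
      case True then show ?thesis using d' by (simp add: B_def)
    next
      case False
      show ?thesis
      proof (cases "Suc i = n")
        case True then show ?thesis using d' c(1) dn by (simp add: B_def dist_commute flip: True)
      next
        case F2: False
        then have "i \<ge> n" "i - n < m" "Suc i - n = Suc (i - n)" using False that by (auto simp: N_def)
        moreover have "dist (f (c (i-n))) (c (Suc (i-n))) < d'/2" using c(4) \<open>i - n < m\<close> by blast
        ultimately show ?thesis using F2 False d' by (auto simp: B_def)
      qed
    qed
    have lastA: "A (N - 1) = c (m - 1)" and lastB: "B (N - 1) = c (m - 1)"
      using m by (auto simp: A_def B_def N_def)
    have wr: "dist (f (c (m - 1))) x < d'/2" using c(4)[rule_format, of "m-1"] c(2) m by simp
    have A0: "A 0 = x" "B 0 = y" using n by (simp_all add: A_def B_def)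
    have wrapA: "dist (f (A (N - 1))) (A 0) < d'" unfolding lastA A0 using wr d' by linarith
    have wrapB: "dist (f (A (N - 1))) (B 0) < d'"
    proof -
      have "dist (f (c (m - 1))) y \<le> dist (f (c (m - 1))) x + dist x y" by (rule dist_triangle)
      then show ?thesis unfolding lastA A0 using wr dxy by linarith
    qed
    have sh: "\<forall>s::int\<Rightarrow>bool. \<exists>y\<in>X. \<forall>j. \<forall>i<N. dist (zpow f g (j * int N + int i) y) ((if s j then B else A) i) < e'"
    proof
      fix s :: "int \<Rightarrow> bool"
      define P where "P t = (if s (t div int N) then B else A) (nat (t mod int N))" for t
      have Pji: "P (j * int N + int i) = (if s j then B else A) i" if "i < N" for j i
        unfolding P_def using blockdivmod[OF that] by simp
      have PX: "\<forall>t. P t \<in> X"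
      proof
        fix t obtain j i where "i < N" "t = j * int N + int i" using blockdecomp[OF N1(2)] by blast
        then show "P t \<in> X" using Pji AX BX by auto
      qed
      have Pst: "\<forall>t. dist (f (P t)) (P (t + 1)) < d'"
      proof
        fix t obtain j i where ji: "i < N" "t = j * int N + int i" using blockdecomp[OF N1(2)] by blast
        show "dist (f (P t)) (P (t + 1)) < d'"
        proof (cases "Suc i < N")
          case True
          have tt: "t + 1 = j * int N + int (Suc i)" using ji by simp
          have p1: "P (t + 1) = (if s j then B else A) (Suc i)" unfolding tt by (rule Pji[OF True])
          have p0: "P t = (if s j then B else A) i" unfolding ji(2) by (rule Pji[OF ji(1)])
          show ?thesis unfolding p0 p1 using stepA[OF True] stepB[OF True] by simp
        next
          case False
          then have iN: "i = N - 1" using ji by simp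
          have "t + 1 = (j + 1) * int N + int 0" using ji iN N1 by (simp add: algebra_simps of_nat_diff)
          then have "P (t + 1) = (if s (j+1) then B else A) 0" using Pji[of 0 "j+1"] N1 by simp
          moreover have "P t = (if s j then B else A) (N - 1)" using Pji[OF ji(1)] ji iN by simp
          ultimately show ?thesis using wrapA wrapB lastA lastB by (simp add: lastA[symmetric])
        qed
      qed
      obtain z where z: "z \<in> X" "\<forall>k. dist (zpow f g k z) (P k) < e'" using shd[OF PX Pst] by blast
      show "\<exists>y\<in>X. \<forall>j. \<forall>i<N. dist (zpow f g (j * int N + int i) y) ((if s j then B else A) i) < e'"
      proof (rule bexI[OF _ z(1)], intro allI impI)
        fix j :: int and i assume iN: "i < N"
        show "dist (zpow f g (j * int N + int i) z) ((if s j then B else A) i) < e'"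
          using z(2)[rule_format, of "j*int N + int i"] Pji[OF iN, of j] by simp
      qed
    qed
    have gpos: "2*e' < \<gamma>" using eg ep by (simp add: e'_def)
    have i0N: "i0 < N" using i0 by (simp add: N_def)
    have dAB: "dist (A i0) (B i0) > 2*e'" using i0 gpos by (simp add: A_def B_def)
    have cb: "\<forall>i<N. dist (A i) (B i) \<le> \<gamma>"
    proof (intro allI impI)
      fix i assume "i < N"
      show "dist (A i) (B i) \<le> \<gamma>"
      proof (cases "i < n")
        case True then show ?thesis using gle by (simp add: A_def B_def)
      next
        case False then show ?thesis using gpos e' by (simp add: A_def B_def)
      qed
    qed
    obtain K where K: "K \<subseteq> X" "compact K" "\<forall>k::int. diameter (zpow f g k ` K) \<le> \<gamma> + 2*e'"
      "(f^^N) ` K = K" "semiconj_full_shift (f^^N) K" "uncountable K" "ereal (ln 2) \<le> top_entropy (f^^N) K"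
      using construct[OF assms(1) N1(1) e' sh i0N dAB cb] by blast
    have "\<forall>k::int. diameter (zpow f g k ` K) \<le> 2 * \<gamma>"
    proof
      fix k :: int
      have "diameter (zpow f g k ` K) \<le> \<gamma> + 2*e'" using K(3) by blast
      then show "diameter (zpow f g k ` K) \<le> 2 * \<gamma>" using gpos by linarith
    qed
    then show "\<exists>N\<ge>1. \<exists>K. K \<subseteq> X \<and> compact K \<and>
        (\<forall>k::int. diameter (zpow f g k ` K) \<le> 2 * \<gamma>) \<and>
        (f ^^ N) ` K = K \<and> semiconj_full_shift (f ^^ N) K \<and>
        uncountable K \<and> ereal (ln 2) \<le> top_entropy (f ^^ N) K"
      using K N1 by blast
  qed
qed

end
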